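(* Let $\mathcal M=\{\rho_\theta:\theta\in\Theta\}$ be a two-parameter qubit model satisfying the regularity conditions and $\theta\in\Theta$. Then $C_\theta^H[W]=C_\theta^R[W]$ for all $2\times2$ real positive definite matrices $W$ if and only if $\mathcal M$ is D-invariant at $\theta$.
   Context: Two-parameter qubit model: density matrices $\rho_\theta$ on $\mathbb C^2$, $\theta=(\theta^1,\theta^2)\in\Theta\subset\mathbb R^2$ open; regularity: each $\rho_\theta$ strictly positive, smooth in $\theta$, $\partial_1\rho_\theta,\partial_2\rho_\theta$ linearly independent ($\partial_i=\partial/\partial\theta^i$). SLD operators $L_{\theta,i}$ (hermitian, $\partial_i\rho_\theta=\tfrac12(\rho_\theta L_{\theta,i}+L_{\theta,i}\rho_\theta)$), RLD operators $\tilde L_{\theta,i}$ ($\partial_i\rho_\theta=\rho_\theta\tilde L_{\theta,i}$); RLD Fisher matrix $\tilde G_\theta=[\mathrm{tr}(\rho_\theta\tilde L_{\theta,j}\tilde L_{\theta,i}^* )]$; $\mathrm{Re},\mathrm{Im}$ of $\tilde G_\theta^{-1}$ are entrywise; $\mathrm{TrAbs}$ of a diagonalizable matrix is the sum of absolute values of its eigenvalues. RLD CR bound: $C_\theta^R[W]=\mathrm{Tr}(W\,\mathrm{Re}\,\tilde G_\theta^{-1})+\mathrm{TrAbs}(W\,\mathrm{Im}\,\tilde G_\theta^{-1})$. Holevo bound: $C_\theta^H[W]=\min_{\vec X}\{\mathrm{Tr}(W\,\mathrm{Re}\,Z_\theta[\vec X])+\mathrm{TrAbs}(W\,\mathrm{Im}\,Z_\theta[\vec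 X])\}$ over pairs $\vec X=(X^1,X^2)$ of hermitian operators with $\mathrm{tr}(\rho_\theta X^i)=0$, $\mathrm{tr}(\partial_i\rho_\theta X^j)=\delta^j_i$, where $Z_\theta[\vec X]=[\mathrm{tr}(\rho_\theta X^jX^i)]_{i,j}$. SLD inner product $\langle X,Y\rangle_\rho=\mathrm{Re}\,\mathrm{tr}(\rho YX^* )$; SLD tangent space $T_\theta(\mathcal M)=\mathrm{span}_{\mathbb R}\{L_{\theta,1},L_{\theta,2}\}$; commutation operator $\mathcal D_\theta$: real-linear map on hermitian operators with $\langle Y,\mathcal D_\theta(X)\rangle_{\rho_\theta}=\frac{1}{2\mathrm{i}}\mathrm{tr}(\rho_\theta[Y,X])$ for all hermitian $X,Y$; $\mathcal M$ is D-invariant at $\theta$ if $\mathcal D_\theta(T_\theta(\mathcal M))\subset T_\theta(\mathcal M)$. *)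

theory Defs
  imports "HOL-Analysis.Analysis" "HOL-Computational_Algebra.Polynomial"
begin

type_synonym qop = "complex^2^2"

definition cadj :: "qop \<Rightarrow> qop" where
  "cadj A = (\<chi> i j. cnj (A $ j $ i))"

definition herm :: "qop \<Rightarrow> bool" where
  "herm A \<longleftrightarrow> cadj A = A"

definition strictly_pos :: "qop \<Rightarrow> bool" where
  "strictly_pos A \<longleftrightarrow> herm A \<and>
     (\<forall>x::complex^2. x \<noteq> 0 \<longrightarrow> Re (\<Sum>i\<in>UNIV. cnj (x $ i) * (A *v x) $ i) > 0)"

definition density :: "qop \<Rightarrow> bool" where
  "density A \<longleftrightarrow> strictly_pos A \<and> trace A = 1"

coinductive smooth_on :: "'a::real_normed_vector set \<Rightarrow> ('a \<Rightarrow> 'b::real_normed_vector) \<Rightarrow> bool"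
  for S where
  "(\<forall>x\<in>S. f differentiable (at x)) \<Longrightarrow>
   (\<forall>v. smooth_on S (\<lambda>x. frechet_derivative f (at x) v)) \<Longrightarrow> smooth_on S f"

definition pd :: "(real^2 \<Rightarrow> qop) \<Rightarrow> real^2 \<Rightarrow> 2 \<Rightarrow> qop" where
  "pd \<rho> \<theta> i = frechet_derivative \<rho> (at \<theta>) (axis i 1)"

definition regular_model :: "(real^2) set \<Rightarrow> (real^2 \<Rightarrow> qop) \<Rightarrow> bool" where
  "regular_model \<Theta> \<rho> \<longleftrightarrow> open \<Theta> \<and> (\<forall>\<theta>\<in>\<Theta>. density (\<rho> \<theta>)) \<and> smooth_on \<Theta> \<rho> \<and>
     (\<forall>\<theta>\<in>\<Theta>. \<forall>a b::real. a *\<^sub>R pd \<rho> \<theta> 1 + b *\<^sub>R pd \<rho> \<theta> 2 = 0 \<longrightarrow> a = 0 \<and> b = 0)"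

definition SLD :: "(real^2 \<Rightarrow> qop) \<Rightarrow> real^2 \<Rightarrow> 2 \<Rightarrow> qop" where
  "SLD \<rho> \<theta> i = (THE L. herm L \<and>
      pd \<rho> \<theta> i = (1/2::real) *\<^sub>R (\<rho> \<theta> ** L + L ** \<rho> \<theta>))"

definition RLD :: "(real^2 \<Rightarrow> qop) \<Rightarrow> real^2 \<Rightarrow> 2 \<Rightarrow> qop" where
  "RLD \<rho> \<theta> i = (THE L. pd \<rho> \<theta> i = \<rho> \<theta> ** L)"

definition RLD_fisher :: "(real^2 \<Rightarrow> qop) \<Rightarrow> real^2 \<Rightarrow> complex^2^2" where
  "RLD_fisher \<rho> \<theta> = (\<chi> i j. trace (\<rho> \<theta> ** RLD \<rho> \<theta> j ** cadj (RLD \<rho> \<theta> i)))"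

definition ReM :: "complex^2^2 \<Rightarrow> real^2^2" where
  "ReM A = (\<chi> i j. Re (A $ i $ j))"

definition ImM :: "complex^2^2 \<Rightarrow> real^2^2" where
  "ImM A = (\<chi> i j. Im (A $ i $ j))"

definition charpoly :: "real^2^2 \<Rightarrow> complex poly" where
  "charpoly M = det ((\<chi> i j. if i = j then [:0, 1:] else 0) - (\<chi> i j. [:complex_of_real (M $ i $ j):]))"

definition TrAbs :: "real^2^2 \<Rightarrow> real" where
  "TrAbs M = sum_mset (image_mset cmod (proots (charpoly M)))"

definition RLD_bound :: "(real^2 \<Rightarrow> qop) \<Rightarrow> real^2 \<Rightarrow> real^2^2 \<Rightarrow> real" where
  "RLD_bound \<rho> \<theta> W = trace (W ** ReM (matrix_inv (RLD_fisher \<rho> \<theta>)))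
      + TrAbs (W ** ImM (matrix_inv (RLD_fisher \<rho> \<theta>)))"

definition Zmat :: "(real^2 \<Rightarrow> qop) \<Rightarrow> real^2 \<Rightarrow> (2 \<Rightarrow> qop) \<Rightarrow> complex^2^2" where
  "Zmat \<rho> \<theta> X = (\<chi> i j. trace (\<rho> \<theta> ** X j ** X i))"

definition loc_unbiased :: "(real^2 \<Rightarrow> qop) \<Rightarrow> real^2 \<Rightarrow> (2 \<Rightarrow> qop) \<Rightarrow> bool" where
  "loc_unbiased \<rho> \<theta> X \<longleftrightarrow> (\<forall>i. herm (X i) \<and> trace (\<rho> \<theta> ** X i) = 0) \<and>
     (\<forall>i j. trace (pd \<rho> \<theta> i ** X j) = (if i = j then 1 else 0))"

definition Holevo_bound :: "(real^2 \<Rightarrow> qop) \<Rightarrow> real^2 \<Rightarrow> real^2^2 \<Rightarrow> real" where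
  "Holevo_bound \<rho> \<theta> W = Inf {trace (W ** ReM (Zmat \<rho> \<theta> X)) + TrAbs (W ** ImM (Zmat \<rho> \<theta> X))
      | X. loc_unbiased \<rho> \<theta> X}"

definition sld_ip :: "qop \<Rightarrow> qop \<Rightarrow> qop \<Rightarrow> real" where
  "sld_ip \<rho> X Y = Re (trace (\<rho> ** Y ** cadj X))"

definition comm_op :: "(real^2 \<Rightarrow> qop) \<Rightarrow> real^2 \<Rightarrow> qop \<Rightarrow> qop" where
  "comm_op \<rho> \<theta> X = (THE Z. herm Z \<and> (\<forall>Y. herm Y \<longrightarrow>
      complex_of_real (sld_ip (\<rho> \<theta>) Y Z) = trace (\<rho> \<theta> ** (Y ** X - X ** Y)) / (2 * \<i>)))"

definition SLD_tangent :: "(real^2 \<Rightarrow> qop) \<Rightarrow> real^2 \<Rightarrow> qop set" where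
  "SLD_tangent \<rho> \<theta> = span {SLD \<rho> \<theta> 1, SLD \<rho> \<theta> 2}"

definition D_invariant :: "(real^2 \<Rightarrow> qop) \<Rightarrow> real^2 \<Rightarrow> bool" where
  "D_invariant \<rho> \<theta> \<longleftrightarrow> comm_op \<rho> \<theta> ` SLD_tangent \<rho> \<theta> \<subseteq> SLD_tangent \<rho> \<theta>"

definition real_posdef :: "real^2^2 \<Rightarrow> bool" where
  "real_posdef W \<longleftrightarrow> transpose W = W \<and> (\<forall>x::real^2. x \<noteq> 0 \<longrightarrow> x \<bullet> (W *v x) > 0)"

end

theory Submission
  imports Defs
begin


definition hm :: "real \<Rightarrow> real^3 \<Rightarrow> qop" where
  "hm a x = (\<chi> i j. if i = 1 then (if j = 1 then complex_of_real (a + x$3) else Complex (x$1) (- x$2))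
                    else (if j = 1 then Complex (x$1) (x$2) else complex_of_real (a - x$3)))"

lemma hm_nth: "hm a x $ 1 $ 1 = complex_of_real (a + x$3)" "hm a x $ 1 $ 2 = Complex (x$1) (- x$2)"
  "hm a x $ 2 $ 1 = Complex (x$1) (x$2)" "hm a x $ 2 $ 2 = complex_of_real (a - x$3)"
  by (simp_all add: hm_def)

lemmas cx = complex_eq_iff sum_2 sum_3 inner_vec_def cross3_def trace_def matrix_matrix_mult_def hm_nth

lemma tr2: "trace (hm a x ** hm b y) = complex_of_real (2*(a*b + x \<bullet> y))"
  by (simp add: cx algebra_simps)

lemma tr3: "trace (hm a x ** hm b y ** hm c z) = complex_of_real (2*(a*b*c + c*(x\<bullet>y) + a*(y\<bullet>z) + b*(x\<bullet>z)))
   + \<i> * complex_of_real (2 * (x \<bullet> cross3 y z))"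
  by (simp add: cx algebra_simps)

lemma tr_comm: "trace (hm a x ** (hm b y ** hm c z - hm c z ** hm b y)) = \<i> * complex_of_real (4 * (x \<bullet> cross3 y z))"
  by (simp add: cx algebra_simps)

lemma trace_hm: "trace (hm a x) = complex_of_real (2*a)"
  by (simp add: cx)

lemma herm_hm: "herm (hm a x)"
  by (simp add: herm_def cadj_def vec_eq_iff forall_2 hm_nth complex_eq_iff)

lemma hm_eq_iff: "hm a x = hm b y \<longleftrightarrow> a = b \<and> x = y"
proof
  assume h: "hm a x = hm b y"
  have "hm a x $ i $ j = hm b y $ i $ j" for i j using h by simp
  from this[of 1 1] this[of 1 2] this[of 2 2]
  have "a + x$3 = b + y$3" "x$1 = y$1" "x$2 = y$2" "a - x$3 = b - y$3"
    by (simp_all add: hm_nth complex_eq_iff)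
  then show "a = b \<and> x = y" by (auto simp: vec_eq_iff forall_3)
qed simp

lemma hm_add: "hm a x + hm b y = hm (a+b) (x+y)"
  by (simp add: vec_eq_iff forall_2 hm_nth complex_eq_iff)

lemma hm_scale: "r *\<^sub>R hm a x = hm (r*a) (r *\<^sub>R x)"
  by (simp add: vec_eq_iff forall_2 hm_nth complex_eq_iff algebra_simps)

lemma hm_zero: "hm 0 0 = 0"
  by (simp add: vec_eq_iff forall_2 hm_nth complex_eq_iff)

lemma herm_ex: assumes "herm X" shows "\<exists>a x. X = hm a x"
proof -
  have h: "cadj X = X" using assms by (simp add: herm_def)
  have e: "cnj (X$j$i) = X$i$j" for i j using arg_cong[OF h, of "\<lambda>M. M$i$j"] by (simp add: cadj_def)
  from e[of 1 1] e[of 2 2] e[of 1 2]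
  have r: "Im (X$1$1) = 0" "Im (X$2$2) = 0" "X$2$1 = cnj (X$1$2)"
    by (auto simp: complex_eq_iff)
  define x :: "real^3" where "x = vector [Re (X$1$2), - Im (X$1$2), (Re (X$1$1) - Re (X$2$2))/2]"
  have "X = hm ((Re (X$1$1) + Re (X$2$2))/2) x"
    using r by (simp add: vec_eq_iff forall_2 hm_nth complex_eq_iff x_def field_simps)
  then show ?thesis by blast
qed

lemma anticomm: "hm a x ** hm b y + hm b y ** hm a x = 2 *\<^sub>R hm (a*b + x \<bullet> y) (a *\<^sub>R y + b *\<^sub>R x)"
  by (simp add: vec_eq_iff forall_2 cx algebra_simps)

lemma cadj_mult: "cadj (A ** B) = cadj B ** cadj A"
  by (simp add: cadj_def vec_eq_iff forall_2 matrix_matrix_mult_def sum_2 mult.commute)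

lemma linear_cadj: "linear cadj"
  by (rule linearI) (simp_all add: cadj_def vec_eq_iff complex_eq_iff)

lemma linear_trace: "linear (trace :: qop \<Rightarrow> complex)"
  by (rule linearI) (simp_all add: trace_def sum_2 complex_eq_iff algebra_simps)



lemma lagrange3: "cross3 a b \<bullet> cross3 a b = (a\<bullet>a)*(b\<bullet>b) - (a\<bullet>b)^2"
  by (simp add: cross3_simps power2_eq_square)

lemma binet3: "cross3 a b \<bullet> cross3 c e = (a\<bullet>c)*(b\<bullet>e) - (a\<bullet>e)*(b\<bullet>c)"
  by (simp add: cross3_simps)

lemma bac_cab: "cross3 a (cross3 b c) = (a\<bullet>c) *\<^sub>R b - (a\<bullet>b) *\<^sub>R c"
  by (simp add: cross3_simps forall_3)

lemma triple_cyc: "a \<bullet> cross3 b c = b \<bullet> cross3 c a" "a \<bullet> cross3 b c = c \<bullet> cross3 a b"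
  by (simp_all add: cross3_simps)

lemma decomp3: "(cross3 a b \<bullet> cross3 a b) *\<^sub>R y = (y \<bullet> cross3 a b) *\<^sub>R cross3 a b
   + ((y\<bullet>a)*(b\<bullet>b) - (y\<bullet>b)*(a\<bullet>b)) *\<^sub>R a + ((y\<bullet>b)*(a\<bullet>a) - (y\<bullet>a)*(a\<bullet>b)) *\<^sub>R b"
  by (simp add: cross3_simps forall_3)

lemma triple3: "(cross3 a b \<bullet> cross3 a b) * (s \<bullet> cross3 x y) =
   (s \<bullet> cross3 a b)*((x\<bullet>a)*(y\<bullet>b) - (x\<bullet>b)*(y\<bullet>a)) - (x\<bullet>cross3 a b)*((s\<bullet>a)*(y\<bullet>b) - (s\<bullet>b)*(y\<bullet>a))
   + (y\<bullet>cross3 a b)*((s\<bullet>a)*(x\<bullet>b) - (s\<bullet>b)*(x\<bullet>a))"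
  by (simp add: cross3_simps)




lemma core_id:
  fixes g11 g12 g22 c p1 p2 u1 u2 w11 w12 w22 N M :: real
  assumes N: "N = g11*g22 - g12^2" and M: "M = c^2 + p1^2*g22 - 2*p1*p2*g12 + p2^2*g11"
  defines "z1 \<equiv> p1*g22 - p2*g12" and "z2 \<equiv> p2*g11 - p1*g12"
  defines "y1 \<equiv> (N - c^2)*u1 - c*z1" and "y2 \<equiv> (N - c^2)*u2 - c*z2"
  shows "(N - c^2) * (w11*(N*(u1*u1 + g22) - (c*u1+z1)*(c*u1+z1))
          + 2*w12*(N*(u1*u2 - g12) - (c*u1+z1)*(c*u2+z2)) + w22*(N*(u2*u2 + g11) - (c*u2+z2)*(c*u2+z2)))
   = (w11*y1^2 + 2*w12*y1*y2 + w22*y2^2) + N*((N - M)*(w11*g22 - 2*w12*g12 + w22*g11)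
       + N*(w22*p1^2 - 2*w12*p1*p2 + w11*p2^2))"
  unfolding z1_def z2_def y1_def y2_def N M by (simp add: algebra_simps power2_eq_square)




lemma span2: "X \<in> span {A, B} \<longleftrightarrow> (\<exists>u v. X = u *\<^sub>R A + v *\<^sub>R B)"
proof -
  have "X \<in> span {A, B} \<longleftrightarrow> (\<exists>u v. X - u *\<^sub>R A = v *\<^sub>R B)"
    by (auto simp add: real_vector.span_breakdown_eq real_vector.span_singleton)
  also have "\<dots> \<longleftrightarrow> (\<exists>u v. X = u *\<^sub>R A + v *\<^sub>R B)"
    by (simp add: diff_eq_eq add.commute)
  finally show ?thesis .
qed

locale qm =
  fixes \<rho> :: "real^2 \<Rightarrow> qop" and \<theta> :: "real^2" and s :: "real^3" and d :: "2 \<Rightarrow> real^3"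
  assumes rho: "\<rho> \<theta> = hm (1/2) ((1/2) *\<^sub>R s)"
    and ss: "s \<bullet> s < 1"
    and pdd: "\<And>i. pd \<rho> \<theta> i = hm 0 ((1/2) *\<^sub>R d i)"
    and nz: "cross3 (d 1) (d 2) \<noteq> 0"
begin

abbreviation "nn \<equiv> cross3 (d 1) (d 2)"
definition "NN = nn \<bullet> nn"
definition "cc = s \<bullet> nn"

lemma NN_pos: "NN > 0"
  using nz by (simp add: NN_def)

lemma NN_eq: "NN = (d 1 \<bullet> d 1) * (d 2 \<bullet> d 2) - (d 1 \<bullet> d 2)^2"
  by (simp add: NN_def lagrange3)

lemma cc2: "cc^2 < NN"
proof -
  have "cc^2 \<le> (s \<bullet> s) * NN"
    unfolding cc_def NN_def power2_eq_square
    by (metis Cauchy_Schwarz_ineq power2_eq_square)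
  also have "\<dots> < NN" using ss NN_pos by simp
  finally show ?thesis .
qed

definition "ll i = d i + ((s \<bullet> d i) / (1 - s \<bullet> s)) *\<^sub>R s"

lemma sld_cond: "(1/2::real) *\<^sub>R (\<rho> \<theta> ** hm a x + hm a x ** \<rho> \<theta>) = hm ((a + s \<bullet> x)/2) ((1/2) *\<^sub>R (x + a *\<^sub>R s))"
  unfolding rho anticomm hm_scale by (simp add: algebra_simps)

lemma ll_prop: "s \<bullet> ll i = (s \<bullet> d i) / (1 - s \<bullet> s)" "ll i - (s \<bullet> ll i) *\<^sub>R s = d i"
proof -
  have ne: "1 - s \<bullet> s \<noteq> 0" using ss by simp
  show 1: "s \<bullet> ll i = (s \<bullet> d i) / (1 - s \<bullet> s)"
  proof -
    have "s \<bullet> ll i = s \<bullet> d i + (s \<bullet> d i / (1 - s \<bullet> s)) * (s \<bullet> s)"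
      unfolding ll_def inner_add_right inner_scaleR_right by simp
    also have "\<dots> = (s \<bullet> d i) / (1 - s \<bullet> s)" using ne by (simp add: field_simps)
    finally show ?thesis .
  qed
  show "ll i - (s \<bullet> ll i) *\<^sub>R s = d i"
    unfolding 1 by (simp add: ll_def)
qed

lemma SLD_eq: "SLD \<rho> \<theta> i = hm (- (s \<bullet> ll i)) (ll i)"
  unfolding SLD_def
proof (rule the_equality)
  show "herm (hm (- (s \<bullet> ll i)) (ll i)) \<and> pd \<rho> \<theta> i = (1/2::real) *\<^sub>R (\<rho> \<theta> ** hm (- (s \<bullet> ll i)) (ll i) + hm (- (s \<bullet> ll i)) (ll i) ** \<rho> \<theta>)"
    unfolding sld_cond pdd using ll_prop[of i] by (simp add: herm_hm hm_eq_iff algebra_simps)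
next
  fix L assume L: "herm L \<and> pd \<rho> \<theta> i = (1/2::real) *\<^sub>R (\<rho> \<theta> ** L + L ** \<rho> \<theta>)"
  then obtain a x where Lx: "L = hm a x" using herm_ex by blast
  from L have "hm 0 ((1/2) *\<^sub>R d i) = hm ((a + s \<bullet> x)/2) ((1/2) *\<^sub>R (x + a *\<^sub>R s))"
    by (simp add: Lx sld_cond pdd)
  then have e1: "a + s \<bullet> x = 0" and e2: "d i = x + a *\<^sub>R s"
    by (simp_all add: hm_eq_iff)
  have ne: "1 - s \<bullet> s \<noteq> 0" using ss by simp
  have a: "a = - (s \<bullet> x)" using e1 by simp
  have "s \<bullet> d i = (s \<bullet> x) * (1 - s \<bullet> s)"
    unfolding e2 inner_add_right inner_scaleR_right by (simp add: a algebra_simps)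
  then have sx: "s \<bullet> x = (s \<bullet> d i) / (1 - s \<bullet> s)" using ne by (simp add: field_simps)
  have x: "x = ll i"
    using e2 a sx by (simp add: ll_def algebra_simps)
  show "L = hm (- (s \<bullet> ll i)) (ll i)" using Lx a x by simp
qed

lemma sld_ip_hm: "sld_ip (\<rho> \<theta>) (hm b' y) (hm b z) = b*b' + b'*(s \<bullet> z) + z \<bullet> y + b*(s \<bullet> y)"
proof -
  have "cadj (hm b' y) = hm b' y" using herm_hm herm_def by blast
  then show ?thesis unfolding sld_ip_def rho
    by (simp add: tr3 algebra_simps inner_commute)
qed

lemma rhs_hm: "trace (\<rho> \<theta> ** (hm b y ** hm a x - hm a x ** hm b y)) / (2 * \<i>) = complex_of_real (s \<bullet> cross3 y x)"
  unfolding rho tr_comm by (simp add: complex_eq_iff)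

lemma comm_op_hm: "comm_op \<rho> \<theta> (hm a x) = hm 0 (cross3 x s)"
  unfolding comm_op_def
proof (rule the_equality)
  show "herm (hm 0 (cross3 x s)) \<and> (\<forall>Y. herm Y \<longrightarrow> complex_of_real (sld_ip (\<rho> \<theta>) Y (hm 0 (cross3 x s))) =
          trace (\<rho> \<theta> ** (Y ** hm a x - hm a x ** Y)) / (2 * \<i>))"
  proof (intro conjI allI impI herm_hm)
    fix Y assume "herm Y"
    then obtain b y where Y: "Y = hm b y" using herm_ex by blast
    have "s \<bullet> cross3 x s = 0" by (simp add: dot_cross_self)
    moreover have "cross3 x s \<bullet> y = s \<bullet> cross3 y x" by (simp add: cross3_simps)
    ultimately show "complex_of_real (sld_ip (\<rho> \<theta>) Y (hm 0 (cross3 x s))) = trace (\<rho> \<theta> ** (Y ** hm a x - hm a x ** Y)) / (2 * \<i>)"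
      unfolding Y sld_ip_hm rhs_hm by simp
  qed
next
  fix Z assume Z: "herm Z \<and> (\<forall>Y. herm Y \<longrightarrow> complex_of_real (sld_ip (\<rho> \<theta>) Y Z) = trace (\<rho> \<theta> ** (Y ** hm a x - hm a x ** Y)) / (2 * \<i>))"
  then obtain b z where Zb: "Z = hm b z" using herm_ex by blast
  have eq: "b*b' + b'*(s \<bullet> z) + z \<bullet> y + b*(s \<bullet> y) = s \<bullet> cross3 y x" for b' y
  proof -
    have "complex_of_real (sld_ip (\<rho> \<theta>) (hm b' y) Z) = trace (\<rho> \<theta> ** (hm b' y ** hm a x - hm a x ** hm b' y)) / (2 * \<i>)"
      using Z herm_hm[of b' y] by blast
    then show ?thesis unfolding Zb sld_ip_hm rhs_hm of_real_eq_iff .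
  qed
  from eq[of 1 0] have e1: "b + s \<bullet> z = 0" by simp
  have "(z + b *\<^sub>R s - cross3 x s) \<bullet> y = 0" for y
    using eq[of 0 y] by (simp add: inner_diff_left inner_add_left cross3_simps)
  from this[of "z + b *\<^sub>R s - cross3 x s"] have "z + b *\<^sub>R s - cross3 x s = 0"
    by (simp only: inner_eq_zero_iff)
  then have e2: "z = cross3 x s - b *\<^sub>R s"
    by (simp add: algebra_simps)
  have "s \<bullet> z = - b * (s \<bullet> s)" using e2 by (simp add: inner_diff_right dot_cross_self)
  with e1 have "b * (1 - s \<bullet> s) = 0" by (simp add: algebra_simps)
  with ss have b: "b = 0" by simp
  show "Z = hm 0 (cross3 x s)" using Zb e2 b by simp
qed

end


lemma charpoly_2: "charpoly M = [: M$1$1 * M$2$2 - M$1$2 * M$2$1, - (M$1$1 + M$2$2), 1 :]"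
  unfolding charpoly_def det_2
  by (simp add: algebra_simps)

lemma TrAbs_2:
  assumes tr: "M$1$1 + M$2$2 = 0" and dt: "M$1$1 * M$2$2 - M$1$2 * M$2$1 \<ge> 0"
  shows "TrAbs M = 2 * sqrt (M$1$1 * M$2$2 - M$1$2 * M$2$1)"
proof -
  define D where "D = M$1$1 * M$2$2 - M$1$2 * M$2$1"
  define r where "r = \<i> * complex_of_real (sqrt D)"
  have "charpoly M = [: complex_of_real D, 0, 1 :]" using tr by (simp add: charpoly_2 D_def)
  also have "\<dots> = [: - (r*r), 0, 1 :]"
  proof -
    have "r * r = - complex_of_real D"
      using dt by (simp add: r_def D_def algebra_simps flip: of_real_mult)
    then show ?thesis by simp
  qed
  also have "\<dots> = [: -r, 1 :] * [: r, 1 :]"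
    by simp
  finally have cp: "charpoly M = [: -r, 1 :] * [: r, 1 :]" .
  have "proots (charpoly M) = {# r, -r #}"
    unfolding cp by (subst proots_mult) auto
  then have "TrAbs M = cmod r + cmod (-r)" by (simp add: TrAbs_def)
  also have "\<dots> = 2 * sqrt D" using dt by (simp add: r_def norm_mult D_def)
  finally show ?thesis by (simp add: D_def)
qed

lemma matrix_inv_eq:
  fixes A B :: "'a::semiring_1^'n^'n"
  assumes "A ** B = mat 1" "B ** A = mat 1" shows "matrix_inv A = B"
proof -
  let ?A' = "matrix_inv A"
  have h: "A ** ?A' = mat 1 \<and> ?A' ** A = mat 1"
    unfolding matrix_inv_def by (rule someI[of _ B]) (use assms in auto)
  have "?A' = ?A' ** (A ** B)" by (simp add: assms)
  also have "\<dots> = (?A' ** A) ** B" by (simp add: matrix_mul_assoc)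
  also have "\<dots> = B" using h by simp
  finally show ?thesis .
qed

definition Fm :: "real \<Rightarrow> real \<Rightarrow> real \<Rightarrow> real \<Rightarrow> real \<Rightarrow> complex^2^2" where
  "Fm g11 g12 g22 c k = (\<chi> i j. if i = 1 then (if j = 1 then complex_of_real (g11/k) else complex_of_real (g12/k) + \<i> * complex_of_real (c/k))
      else (if j = 1 then complex_of_real (g12/k) - \<i> * complex_of_real (c/k) else complex_of_real (g22/k)))"

definition Bm :: "real \<Rightarrow> real \<Rightarrow> real \<Rightarrow> real \<Rightarrow> real \<Rightarrow> complex^2^2" where
  "Bm g11 g12 g22 c k = (\<chi> i j. complex_of_real (k / (g11*g22 - g12^2 - c^2)) *
      (if i = 1 then (if j = 1 then complex_of_real g22 else - complex_of_real g12 - \<i> * complex_of_real c)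
      else (if j = 1 then - complex_of_real g12 + \<i> * complex_of_real c else complex_of_real g11)))"

lemma inv_Fm:
  assumes k: "k \<noteq> 0" and D: "g11*g22 - g12^2 - c^2 \<noteq> 0"
  shows "matrix_inv (Fm g11 g12 g22 c k) = Bm g11 g12 g22 c k"
proof -
  define D where "D = g11*g22 - g12^2 - c^2"
  have hD: "g11*g22 = D + g12*g12 + c*c" by (simp add: D_def power2_eq_square)
  have D0: "D \<noteq> 0" using D by (simp add: D_def)
  have B: "Bm g11 g12 g22 c k = (\<chi> i j. complex_of_real (k / D) *
      (if i = 1 then (if j = 1 then complex_of_real g22 else - complex_of_real g12 - \<i> * complex_of_real c)
      else (if j = 1 then - complex_of_real g12 + \<i> * complex_of_real c else complex_of_real g11)))"
    by (simp add: Bm_def D_def)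
  show ?thesis unfolding B
  proof (rule matrix_inv_eq)
    show "Fm g11 g12 g22 c k ** (\<chi> i j. complex_of_real (k / D) *
      (if i = 1 then (if j = 1 then complex_of_real g22 else - complex_of_real g12 - \<i> * complex_of_real c)
      else (if j = 1 then - complex_of_real g12 + \<i> * complex_of_real c else complex_of_real g11))) = mat 1"
      using k D0 by (simp add: Fm_def vec_eq_iff forall_2 matrix_matrix_mult_def sum_2 mat_def complex_eq_iff
        field_simps; simp add: hD algebra_simps)
    show "(\<chi> i j. complex_of_real (k / D) *
      (if i = 1 then (if j = 1 then complex_of_real g22 else - complex_of_real g12 - \<i> * complex_of_real c)
      else (if j = 1 then - complex_of_real g12 + \<i> * complex_of_real c else complex_of_real g11))) ** Fm g11 g12 g22 c k = mat 1"
      using k D0 by (simp add: Fm_def vec_eq_iff forall_2 matrix_matrix_mult_def sum_2 mat_def complex_eq_iff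
        field_simps; simp add: hD algebra_simps)
  qed
qed

lemma lin2:
  fixes a b c p1 p2 :: real
  assumes e1: "a*p2 - p1*b = 0" and e2: "b*p2 - p1*c = 0" and ne: "a*c - b^2 \<noteq> 0"
  shows "p1 = 0" "p2 = 0"
proof -
  have "(a*c - b^2)*p1 = b*(a*p2 - p1*b) - a*(b*p2 - p1*c)" by (simp add: algebra_simps power2_eq_square)
  then show "p1 = 0" using e1 e2 ne by simp
  have "(a*c - b^2)*p2 = c*(a*p2 - p1*b) - b*(b*p2 - p1*c)" by (simp add: algebra_simps power2_eq_square)
  then show "p2 = 0" using e1 e2 ne by simp
qed

lemma cross_comb: "cross3 (u *\<^sub>R a + v *\<^sub>R b) (t *\<^sub>R cross3 a b) =
   (t * (u * (a \<bullet> b) + v * (b \<bullet> b))) *\<^sub>R a - (t * (u * (a \<bullet> a) + v * (a \<bullet> b))) *\<^sub>R b"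
  by (simp add: cross3_simps forall_3)

context qm begin

lemma ll_cross: "cross3 (ll i) s = cross3 (d i) s"
  by (simp add: ll_def cross_add_left cross_mult_left)

lemma SLD_in: "SLD \<rho> \<theta> i \<in> SLD_tangent \<rho> \<theta>"
proof -
  have "i = 1 \<or> i = 2" using exhaust_2 by blast
  then show ?thesis unfolding SLD_tangent_def by (auto intro: real_vector.span_base)
qed

lemma Dinv_imp:
  assumes "D_invariant \<rho> \<theta>"
  shows "s \<bullet> d 1 = 0" "s \<bullet> d 2 = 0"
proof -
  have key: "nn \<bullet> cross3 (d i) s = 0" for i
  proof -
    have "comm_op \<rho> \<theta> (SLD \<rho> \<theta> i) \<in> SLD_tangent \<rho> \<theta>"
      using assms SLD_in[of i] unfolding D_invariant_def by blast
    then obtain u v where uv: "hm 0 (cross3 (ll i) s) = u *\<^sub>R hm (- (s \<bullet> ll 1)) (ll 1) + v *\<^sub>R hm (- (s \<bullet> ll 2)) (ll 2)"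
      unfolding SLD_tangent_def SLD_eq comm_op_hm span2 by blast
    then have e1: "0 = u * (- (s \<bullet> ll 1)) + v * (- (s \<bullet> ll 2))" and e2: "cross3 (ll i) s = u *\<^sub>R ll 1 + v *\<^sub>R ll 2"
      unfolding hm_scale hm_add hm_eq_iff by auto
    have l1: "ll 1 = d 1 + (s \<bullet> ll 1) *\<^sub>R s" and l2: "ll 2 = d 2 + (s \<bullet> ll 2) *\<^sub>R s"
      using ll_prop(2)[of 1] ll_prop(2)[of 2] unfolding diff_eq_eq by simp_all
    have "u *\<^sub>R ll 1 + v *\<^sub>R ll 2 = u *\<^sub>R d 1 + v *\<^sub>R d 2 + (u * (s \<bullet> ll 1) + v * (s \<bullet> ll 2)) *\<^sub>R s"
      by (subst l1, subst l2) (simp add: algebra_simps)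
    also have "\<dots> = u *\<^sub>R d 1 + v *\<^sub>R d 2" using e1 by (simp add: algebra_simps)
    finally have "cross3 (d i) s = u *\<^sub>R d 1 + v *\<^sub>R d 2" using e2 ll_cross by simp
    moreover have "nn \<bullet> d 1 = 0" "nn \<bullet> d 2 = 0" by (simp_all add: cross3_simps)
    ultimately show ?thesis by (simp add: inner_add_right)
  qed
  have k1: "(d 1 \<bullet> d 1) * (s \<bullet> d 2) - (s \<bullet> d 1) * (d 1 \<bullet> d 2) = 0"
    using key[of 1] unfolding binet3 by (simp add: inner_commute)
  have k2: "(d 1 \<bullet> d 2) * (s \<bullet> d 2) - (s \<bullet> d 1) * (d 2 \<bullet> d 2) = 0"
    using key[of 2] unfolding binet3 by (simp add: inner_commute)
  have ne: "(d 1 \<bullet> d 1) * (d 2 \<bullet> d 2) - (d 1 \<bullet> d 2)^2 \<noteq> 0" using NN_pos NN_eq by simp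
  show "s \<bullet> d 1 = 0" by (rule lin2(1)[OF k1 k2 ne])
  show "s \<bullet> d 2 = 0" by (rule lin2(2)[OF k1 k2 ne])
qed

lemma Dinv_if:
  assumes p1: "s \<bullet> d 1 = 0" and p2: "s \<bullet> d 2 = 0"
  shows "D_invariant \<rho> \<theta>"
proof -
  have ll: "ll i = d i" if "i = 1 \<or> i = 2" for i using that p1 p2 by (auto simp: ll_def)
  have sl: "s \<bullet> ll 1 = 0" "s \<bullet> ll 2 = 0" using ll p1 p2 by auto
  have T: "SLD_tangent \<rho> \<theta> = span {hm 0 (d 1), hm 0 (d 2)}"
    unfolding SLD_tangent_def SLD_eq sl using ll by simp
  have "NN *\<^sub>R s = cc *\<^sub>R nn"
    using decomp3[of "d 1" "d 2" s] p1 p2 unfolding NN_def cc_def by (simp add: inner_commute)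
  then have "inverse NN *\<^sub>R (NN *\<^sub>R s) = inverse NN *\<^sub>R (cc *\<^sub>R nn)" by simp
  then have sn: "s = (cc / NN) *\<^sub>R nn" using NN_pos
    by (simp add: divide_inverse_commute)
  show ?thesis unfolding D_invariant_def T
  proof
    fix Y assume "Y \<in> comm_op \<rho> \<theta> ` span {hm 0 (d 1), hm 0 (d 2)}"
    then obtain X where X: "X \<in> span {hm 0 (d 1), hm 0 (d 2)}" "Y = comm_op \<rho> \<theta> X" by blast
    from X(1) obtain u v where "X = u *\<^sub>R hm 0 (d 1) + v *\<^sub>R hm 0 (d 2)"
      unfolding span2 by blast
    with X(2) have Y: "Y = comm_op \<rho> \<theta> (u *\<^sub>R hm 0 (d 1) + v *\<^sub>R hm 0 (d 2))" by simp
    have cr: "cross3 (u *\<^sub>R d 1 + v *\<^sub>R d 2) s =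
        ((cc/NN) * (u * (d 1 \<bullet> d 2) + v * (d 2 \<bullet> d 2))) *\<^sub>R d 1 - ((cc/NN) * (u * (d 1 \<bullet> d 1) + v * (d 1 \<bullet> d 2))) *\<^sub>R d 2"
    proof -
      have "cross3 (u *\<^sub>R d 1 + v *\<^sub>R d 2) s = cross3 (u *\<^sub>R d 1 + v *\<^sub>R d 2) ((cc/NN) *\<^sub>R nn)"
        using sn by (rule arg_cong)
      also have "\<dots> = ((cc/NN) * (u * (d 1 \<bullet> d 2) + v * (d 2 \<bullet> d 2))) *\<^sub>R d 1 - ((cc/NN) * (u * (d 1 \<bullet> d 1) + v * (d 1 \<bullet> d 2))) *\<^sub>R d 2"
        by (rule cross_comb)
      finally show ?thesis .
    qed
    have "Y = hm 0 (cross3 (u *\<^sub>R d 1 + v *\<^sub>R d 2) s)"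
      unfolding Y hm_scale hm_add by (simp add: comm_op_hm)
    also have "\<dots> = ((cc/NN) * (u * (d 1 \<bullet> d 2) + v * (d 2 \<bullet> d 2))) *\<^sub>R hm 0 (d 1) + (- ((cc/NN) * (u * (d 1 \<bullet> d 1) + v * (d 1 \<bullet> d 2)))) *\<^sub>R hm 0 (d 2)"
      unfolding cr hm_scale hm_add by simp
    finally show "Y \<in> span {hm 0 (d 1), hm 0 (d 2)}"
      unfolding span2 by blast
  qed
qed

lemma Dinv_iff: "D_invariant \<rho> \<theta> \<longleftrightarrow> s \<bullet> d 1 = 0 \<and> s \<bullet> d 2 = 0"
  using Dinv_imp Dinv_if by blast

end


lemma hm_inv:
  fixes x :: "real^3"
  assumes k: "k = 1 - x \<bullet> x" "k \<noteq> 0"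
  shows "hm (1/2) ((1/2) *\<^sub>R x) ** hm (2/k) ((-2/k) *\<^sub>R x) = mat 1"
    "hm (2/k) ((-2/k) *\<^sub>R x) ** hm (1/2) ((1/2) *\<^sub>R x) = mat 1"
proof -
  have k': "k = 1 - (x$1*x$1 + x$2*x$2 + x$3*x$3)" using k by (simp add: inner_vec_def sum_3)
  show "hm (1/2) ((1/2) *\<^sub>R x) ** hm (2/k) ((-2/k) *\<^sub>R x) = mat 1"
    using k(2) by (simp add: vec_eq_iff forall_2 matrix_matrix_mult_def sum_2 hm_nth mat_def complex_eq_iff
        field_simps; simp add: k' algebra_simps)
  show "hm (2/k) ((-2/k) *\<^sub>R x) ** hm (1/2) ((1/2) *\<^sub>R x) = mat 1"
    using k(2) by (simp add: vec_eq_iff forall_2 matrix_matrix_mult_def sum_2 hm_nth mat_def complex_eq_iff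
        field_simps; simp add: k' algebra_simps)
qed

lemma tr3_P:
  assumes "k \<noteq> 0"
  shows "trace (hm 0 ((1/2) *\<^sub>R a) ** hm 0 ((1/2) *\<^sub>R b) ** hm (2/k) ((-2/k) *\<^sub>R x)) =
    complex_of_real ((b \<bullet> a) / k) - \<i> * complex_of_real ((a \<bullet> cross3 b x) / k)"
  unfolding tr3 using assms by (simp add: cross_mult_left cross_mult_right inner_commute complex_eq_iff)

context qm begin

definition "PP = hm (2/(1 - s \<bullet> s)) ((-2/(1 - s \<bullet> s)) *\<^sub>R s)"

lemma ss_ne: "1 - s \<bullet> s \<noteq> 0" using ss by simp

lemma rhoPP: "\<rho> \<theta> ** PP = mat 1" "PP ** \<rho> \<theta> = mat 1"
  unfolding rho PP_def using hm_inv[OF refl ss_ne] by auto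

lemma RLD_eq: "RLD \<rho> \<theta> i = PP ** pd \<rho> \<theta> i"
  unfolding RLD_def
proof (rule the_equality)
  show "pd \<rho> \<theta> i = \<rho> \<theta> ** (PP ** pd \<rho> \<theta> i)"
    by (simp add: matrix_mul_assoc rhoPP)
next
  fix L assume "pd \<rho> \<theta> i = \<rho> \<theta> ** L"
  then have "PP ** pd \<rho> \<theta> i = (PP ** \<rho> \<theta>) ** L" by (simp add: matrix_mul_assoc)
  then show "L = PP ** pd \<rho> \<theta> i" by (simp add: rhoPP)
qed

lemma fisher_entry: "RLD_fisher \<rho> \<theta> $ i $ j = complex_of_real ((d i \<bullet> d j) / (1 - s \<bullet> s))
    - \<i> * complex_of_real ((d j \<bullet> cross3 (d i) s) / (1 - s \<bullet> s))"
proof -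
  have cP: "cadj PP = PP" unfolding PP_def using herm_hm herm_def by blast
  have cd: "cadj (pd \<rho> \<theta> i) = pd \<rho> \<theta> i" unfolding pdd using herm_hm herm_def by blast
  have "RLD_fisher \<rho> \<theta> $ i $ j = trace (\<rho> \<theta> ** (PP ** pd \<rho> \<theta> j) ** (pd \<rho> \<theta> i ** PP))"
    unfolding RLD_fisher_def RLD_eq cadj_mult cP by (simp add: cd)
  also have "\<dots> = trace (pd \<rho> \<theta> j ** pd \<rho> \<theta> i ** PP)"
  proof -
    have "\<rho> \<theta> ** (PP ** pd \<rho> \<theta> j) = pd \<rho> \<theta> j" by (simp add: matrix_mul_assoc rhoPP)
    then show ?thesis by (simp add: matrix_mul_assoc)
  qed
  also have "\<dots> = complex_of_real ((d i \<bullet> d j) / (1 - s \<bullet> s))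
    - \<i> * complex_of_real ((d j \<bullet> cross3 (d i) s) / (1 - s \<bullet> s))"
    unfolding pdd PP_def tr3_P[OF ss_ne] by (simp add: inner_commute)
  finally show ?thesis .
qed

lemma fisher_eq: "RLD_fisher \<rho> \<theta> = Fm (d 1 \<bullet> d 1) (d 1 \<bullet> d 2) (d 2 \<bullet> d 2) cc (1 - s \<bullet> s)"
proof -
  have t: "d 1 \<bullet> cross3 (d 1) s = 0" "d 2 \<bullet> cross3 (d 2) s = 0" "d 2 \<bullet> cross3 (d 1) s = - cc"
    "d 1 \<bullet> cross3 (d 2) s = cc" "cross3 (d 1) s \<bullet> d 1 = 0" "cross3 (d 2) s \<bullet> d 2 = 0"
    "cross3 (d 1) s \<bullet> d 2 = - cc" "cross3 (d 2) s \<bullet> d 1 = cc"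
    by (simp_all add: cc_def cross3_simps)
  show ?thesis
    by (simp add: vec_eq_iff forall_2 fisher_entry Fm_def t inner_commute complex_eq_iff)
qed

definition "kap = (1 - s \<bullet> s) / (NN - cc^2)"

lemma kap_pos: "kap > 0"
  using ss cc2 by (simp add: kap_def)

lemma RLD_bound_eq:
  assumes W: "W$1$2 = W$2$1" "W$1$1 * W$2$2 - W$1$2 * W$2$1 \<ge> 0"
  shows "RLD_bound \<rho> \<theta> W = kap * (W$1$1 * (d 2 \<bullet> d 2) - 2 * W$1$2 * (d 1 \<bullet> d 2) + W$2$2 * (d 1 \<bullet> d 1))
     + 2 * kap * \<bar>cc\<bar> * sqrt (W$1$1 * W$2$2 - W$1$2 * W$2$1)"
proof -
  have D: "(d 1 \<bullet> d 1) * (d 2 \<bullet> d 2) - (d 1 \<bullet> d 2)^2 - cc^2 \<noteq> 0" using cc2 NN_eq by simp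
  have inv: "matrix_inv (RLD_fisher \<rho> \<theta>) = Bm (d 1 \<bullet> d 1) (d 1 \<bullet> d 2) (d 2 \<bullet> d 2) cc (1 - s \<bullet> s)"
    unfolding fisher_eq by (rule inv_Fm[OF ss_ne D])
  have kk: "(1 - s \<bullet> s) / ((d 1 \<bullet> d 1) * (d 2 \<bullet> d 2) - (d 1 \<bullet> d 2)^2 - cc^2) = kap"
    by (simp add: kap_def NN_eq)
  define B where "B = Bm (d 1 \<bullet> d 1) (d 1 \<bullet> d 2) (d 2 \<bullet> d 2) cc (1 - s \<bullet> s)"
  have Re: "ReM B = (\<chi> i j. kap * (if i = 1 then (if j = 1 then d 2 \<bullet> d 2 else - (d 1 \<bullet> d 2))
      else (if j = 1 then - (d 1 \<bullet> d 2) else d 1 \<bullet> d 1)))"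
    by (simp add: B_def Bm_def ReM_def vec_eq_iff forall_2 kk)
  have Im: "ImM B = (\<chi> i j. kap * (if i = 1 then (if j = 1 then 0 else - cc)
      else (if j = 1 then cc else 0)))"
    by (simp add: B_def Bm_def ImM_def vec_eq_iff forall_2 kk)
  have tr: "trace (W ** ReM B) = kap * (W$1$1 * (d 2 \<bullet> d 2) - 2 * W$1$2 * (d 1 \<bullet> d 2) + W$2$2 * (d 1 \<bullet> d 1))"
    unfolding Re using W(1) by (simp add: trace_def matrix_matrix_mult_def sum_2 algebra_simps)
  let ?M = "W ** ImM B"
  have m: "?M$1$1 = kap * cc * W$1$2" "?M$2$2 = - kap * cc * W$2$1" "?M$1$2 = - kap * cc * W$1$1"
     "?M$2$1 = kap * cc * W$2$2"
    unfolding Im by (simp_all add: matrix_matrix_mult_def sum_2)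
  have dt: "?M$1$1 * ?M$2$2 - ?M$1$2 * ?M$2$1 = (kap * cc)^2 * (W$1$1 * W$2$2 - W$1$2 * W$2$1)"
    unfolding m by (simp add: algebra_simps power2_eq_square)
  have ta: "TrAbs ?M = 2 * kap * \<bar>cc\<bar> * sqrt (W$1$1 * W$2$2 - W$1$2 * W$2$1)"
  proof -
    have "TrAbs ?M = 2 * sqrt (?M$1$1 * ?M$2$2 - ?M$1$2 * ?M$2$1)"
    proof (rule TrAbs_2)
      show "?M$1$1 + ?M$2$2 = 0" unfolding m using W(1) by simp
      show "?M$1$1 * ?M$2$2 - ?M$1$2 * ?M$2$1 \<ge> 0" unfolding dt using W(2) by simp
    qed
    also have "\<dots> = 2 * kap * \<bar>cc\<bar> * sqrt (W$1$1 * W$2$2 - W$1$2 * W$2$1)"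
      unfolding dt real_sqrt_mult using kap_pos by (simp add: abs_mult)
    finally show ?thesis .
  qed
  show ?thesis unfolding RLD_bound_def inv B_def[symmetric] tr ta by simp
qed

end


lemma core2:
  fixes N c M g11 g12 g22 p1 p2 u1 u2 w11 w12 w22 X11 X12 X22 S1 S2 :: real
  assumes N: "N = g11*g22 - g12^2" and M: "M = c^2 + p1^2*g22 - 2*p1*p2*g12 + p2^2*g11"
    and h11: "N*X11 = u1*u1 + g22" and h12: "N*X12 = u1*u2 - g12" and h22: "N*X22 = u2*u2 + g11"
    and hs1: "N*S1 = c*u1 + (p1*g22 - p2*g12)" and hs2: "N*S2 = c*u2 + (p2*g11 - p1*g12)"
  shows "(N - c^2) * (N^2 * (w11*(X11 - S1*S1) + 2*w12*(X12 - S1*S2) + w22*(X22 - S2*S2)))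
   = (w11*((N - c^2)*u1 - c*(p1*g22 - p2*g12))^2 + 2*w12*((N - c^2)*u1 - c*(p1*g22 - p2*g12))*((N - c^2)*u2 - c*(p2*g11 - p1*g12))
       + w22*((N - c^2)*u2 - c*(p2*g11 - p1*g12))^2)
     + N*((N - M)*(w11*g22 - 2*w12*g12 + w22*g11) + N*(w22*p1^2 - 2*w12*p1*p2 + w11*p2^2))"
proof -
  have "N^2 * (w11*(X11 - S1*S1) + 2*w12*(X12 - S1*S2) + w22*(X22 - S2*S2))
      = w11*(N*(N*X11) - (N*S1)*(N*S1)) + 2*w12*(N*(N*X12) - (N*S1)*(N*S2)) + w22*(N*(N*X22) - (N*S2)*(N*S2))"
    by (simp add: algebra_simps power2_eq_square)
  also have "\<dots> = w11*(N*(u1*u1 + g22) - (c*u1 + (p1*g22 - p2*g12))*(c*u1 + (p1*g22 - p2*g12)))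
      + 2*w12*(N*(u1*u2 - g12) - (c*u1 + (p1*g22 - p2*g12))*(c*u2 + (p2*g11 - p1*g12)))
      + w22*(N*(u2*u2 + g11) - (c*u2 + (p2*g11 - p1*g12))*(c*u2 + (p2*g11 - p1*g12)))"
    unfolding h11 h12 h22 hs1 hs2 ..
  finally have e: "N^2 * (w11*(X11 - S1*S1) + 2*w12*(X12 - S1*S2) + w22*(X22 - S2*S2)) = \<dots>" .
  show ?thesis unfolding e by (rule core_id[OF N M])
qed

context qm begin

lemma LU_repr:
  assumes "loc_unbiased \<rho> \<theta> X"
  obtains x where "\<And>j. X j = hm (- (s \<bullet> x j)) (x j)" and "\<And>i j. d i \<bullet> x j = (if i = j then 1 else 0)"
proof -
  have "\<forall>j. \<exists>a y. X j = hm a y" using assms herm_ex unfolding loc_unbiased_def by blast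
  then obtain a y where ay: "\<And>j. X j = hm (a j) (y j)" by metis
  have a: "a j = - (s \<bullet> y j)" for j
  proof -
    have "trace (\<rho> \<theta> ** X j) = 0" using assms unfolding loc_unbiased_def by blast
    then show ?thesis unfolding ay rho tr2 of_real_eq_0_iff by (simp add: algebra_simps)
  qed
  have dy: "d i \<bullet> y j = (if i = j then 1 else 0)" for i j
  proof -
    have "trace (pd \<rho> \<theta> i ** X j) = (if i = j then 1 else 0)" using assms unfolding loc_unbiased_def by blast
    then show ?thesis unfolding ay pdd tr2 by (cases "i = j") auto
  qed
  show ?thesis by (rule that[of y]) (use ay a dy in auto)
qed

lemma LU_mk:
  assumes "\<And>i j. d i \<bullet> x j = (if i = j then 1 else 0)"
  shows "loc_unbiased \<rho> \<theta> (\<lambda>j. hm (- (s \<bullet> x j)) (x j))"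
  unfolding loc_unbiased_def rho pdd tr2 using assms by (simp add: herm_hm)

definition "Rr x i j = x i \<bullet> x j - (s \<bullet> x i) * (s \<bullet> x j)"

lemma Zmat_entry: "Zmat \<rho> \<theta> (\<lambda>j. hm (- (s \<bullet> x j)) (x j)) $ i $ j =
   complex_of_real (Rr x i j) + \<i> * complex_of_real (s \<bullet> cross3 (x j) (x i))"
  unfolding Zmat_def rho Rr_def by (simp add: tr3 algebra_simps inner_commute)

lemma hol_val:
  assumes W: "W$1$2 = W$2$1" "W$1$1 * W$2$2 - W$1$2 * W$2$1 \<ge> 0"
  shows "trace (W ** ReM (Zmat \<rho> \<theta> (\<lambda>j. hm (- (s \<bullet> x j)) (x j)))) + TrAbs (W ** ImM (Zmat \<rho> \<theta> (\<lambda>j. hm (- (s \<bullet> x j)) (x j))))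
    = W$1$1 * Rr x 1 1 + 2 * W$1$2 * Rr x 1 2 + W$2$2 * Rr x 2 2
      + 2 * \<bar>s \<bullet> cross3 (x 1) (x 2)\<bar> * sqrt (W$1$1 * W$2$2 - W$1$2 * W$2$1)"
proof -
  define Z where "Z = Zmat \<rho> \<theta> (\<lambda>j. hm (- (s \<bullet> x j)) (x j))"
  define A where "A = s \<bullet> cross3 (x 1) (x 2)"
  have c1: "s \<bullet> cross3 (x 2) (x 1) = - A" unfolding A_def by (simp add: cross3_simps)
  have c0: "s \<bullet> cross3 (x i) (x i) = 0" for i by simp
  have R21: "Rr x 2 1 = Rr x 1 2" by (simp add: Rr_def inner_commute)
  have Re: "ReM Z = (\<chi> i j. Rr x i j)" by (simp add: ReM_def Z_def Zmat_entry vec_eq_iff)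
  have Im: "ImM Z = (\<chi> i j. s \<bullet> cross3 (x j) (x i))" by (simp add: ImM_def Z_def Zmat_entry vec_eq_iff)
  have tr: "trace (W ** ReM Z) = W$1$1 * Rr x 1 1 + 2 * W$1$2 * Rr x 1 2 + W$2$2 * Rr x 2 2"
    unfolding Re using W(1) R21 by (simp add: trace_def matrix_matrix_mult_def sum_2)
  let ?M = "W ** ImM Z"
  have m: "?M$1$1 = W$1$2 * A" "?M$2$2 = - W$2$1 * A" "?M$1$2 = - W$1$1 * A" "?M$2$1 = W$2$2 * A"
    unfolding Im by (simp_all add: matrix_matrix_mult_def sum_2 c1 A_def)
  have dt: "?M$1$1 * ?M$2$2 - ?M$1$2 * ?M$2$1 = A^2 * (W$1$1 * W$2$2 - W$1$2 * W$2$1)"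
    unfolding m by (simp add: algebra_simps power2_eq_square)
  have ta: "TrAbs ?M = 2 * \<bar>A\<bar> * sqrt (W$1$1 * W$2$2 - W$1$2 * W$2$1)"
  proof -
    have "TrAbs ?M = 2 * sqrt (?M$1$1 * ?M$2$2 - ?M$1$2 * ?M$2$1)"
    proof (rule TrAbs_2)
      show "?M$1$1 + ?M$2$2 = 0" unfolding m using W(1) by simp
      show "?M$1$1 * ?M$2$2 - ?M$1$2 * ?M$2$1 \<ge> 0" unfolding dt using W(2) by simp
    qed
    also have "\<dots> = 2 * \<bar>A\<bar> * sqrt (W$1$1 * W$2$2 - W$1$2 * W$2$1)"
      unfolding dt real_sqrt_mult by simp
    finally show ?thesis .
  qed
  show ?thesis unfolding Z_def[symmetric] A_def[symmetric] tr ta by simp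
qed

lemma gram: "NN * (y \<bullet> z) = (y \<bullet> nn) * (z \<bullet> nn) + ((y \<bullet> d 1) * (d 2 \<bullet> d 2) - (y \<bullet> d 2) * (d 1 \<bullet> d 2)) * (z \<bullet> d 1)
   + ((y \<bullet> d 2) * (d 1 \<bullet> d 1) - (y \<bullet> d 1) * (d 1 \<bullet> d 2)) * (z \<bullet> d 2)"
proof -
  have "(NN *\<^sub>R y) \<bullet> z = NN * (y \<bullet> z)" by simp
  then show ?thesis unfolding NN_def decomp3 by (simp add: inner_add_left algebra_simps inner_commute)
qed

lemma red:
  assumes dx: "\<And>i j. d i \<bullet> x j = (if i = j then 1 else 0)"
  shows "NN * (x 1 \<bullet> x 1) = (x 1 \<bullet> nn) * (x 1 \<bullet> nn) + d 2 \<bullet> d 2"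
    "NN * (x 1 \<bullet> x 2) = (x 1 \<bullet> nn) * (x 2 \<bullet> nn) - d 1 \<bullet> d 2"
    "NN * (x 2 \<bullet> x 2) = (x 2 \<bullet> nn) * (x 2 \<bullet> nn) + d 1 \<bullet> d 1"
    "NN * (s \<bullet> x 1) = cc * (x 1 \<bullet> nn) + ((s \<bullet> d 1) * (d 2 \<bullet> d 2) - (s \<bullet> d 2) * (d 1 \<bullet> d 2))"
    "NN * (s \<bullet> x 2) = cc * (x 2 \<bullet> nn) + ((s \<bullet> d 2) * (d 1 \<bullet> d 1) - (s \<bullet> d 1) * (d 1 \<bullet> d 2))"
    "NN * (s \<bullet> s) = cc^2 + (s \<bullet> d 1)^2 * (d 2 \<bullet> d 2) - 2 * (s \<bullet> d 1) * (s \<bullet> d 2) * (d 1 \<bullet> d 2) + (s \<bullet> d 2)^2 * (d 1 \<bullet> d 1)"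
    "NN * (s \<bullet> cross3 (x 1) (x 2)) = cc - (s \<bullet> d 1) * (x 1 \<bullet> nn) - (s \<bullet> d 2) * (x 2 \<bullet> nn)"
proof -
  have c: "x 1 \<bullet> d 1 = 1" "x 1 \<bullet> d 2 = 0" "x 2 \<bullet> d 1 = 0" "x 2 \<bullet> d 2 = 1"
    using dx[of 1 1] dx[of 2 1] dx[of 1 2] dx[of 2 2] by (simp_all add: inner_commute)
  show "NN * (x 1 \<bullet> x 1) = (x 1 \<bullet> nn) * (x 1 \<bullet> nn) + d 2 \<bullet> d 2"
    "NN * (x 1 \<bullet> x 2) = (x 1 \<bullet> nn) * (x 2 \<bullet> nn) - d 1 \<bullet> d 2"
    "NN * (x 2 \<bullet> x 2) = (x 2 \<bullet> nn) * (x 2 \<bullet> nn) + d 1 \<bullet> d 1"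
    by (simp_all add: gram c)
  show "NN * (s \<bullet> x 1) = cc * (x 1 \<bullet> nn) + ((s \<bullet> d 1) * (d 2 \<bullet> d 2) - (s \<bullet> d 2) * (d 1 \<bullet> d 2))"
    "NN * (s \<bullet> x 2) = cc * (x 2 \<bullet> nn) + ((s \<bullet> d 2) * (d 1 \<bullet> d 1) - (s \<bullet> d 1) * (d 1 \<bullet> d 2))"
    by (simp_all add: gram c cc_def[symmetric])
  show "NN * (s \<bullet> s) = cc^2 + (s \<bullet> d 1)^2 * (d 2 \<bullet> d 2) - 2 * (s \<bullet> d 1) * (s \<bullet> d 2) * (d 1 \<bullet> d 2) + (s \<bullet> d 2)^2 * (d 1 \<bullet> d 1)"
    by (simp add: gram cc_def algebra_simps power2_eq_square)
  show "NN * (s \<bullet> cross3 (x 1) (x 2)) = cc - (s \<bullet> d 1) * (x 1 \<bullet> nn) - (s \<bullet> d 2) * (x 2 \<bullet> nn)"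
    unfolding NN_def triple3 using c by (simp add: cc_def algebra_simps)
qed

end


lemma posdef_facts:
  assumes "real_posdef W"
  shows "W$1$2 = W$2$1" "W$1$1 > 0"
    "\<And>v1 v2. W$1$1 * v1^2 + 2 * W$1$2 * v1 * v2 + W$2$2 * v2^2 \<ge> 0"
    "W$1$1 * W$2$2 - W$1$2 * W$2$1 \<ge> 0"
proof -
  have t: "transpose W = W" and p: "\<And>x. x \<noteq> 0 \<Longrightarrow> x \<bullet> (W *v x) > 0" using assms by (auto simp: real_posdef_def)
  have "transpose W $ 1 $ 2 = W $ 1 $ 2" using t by simp
  then show sym: "W$1$2 = W$2$1" by (simp add: transpose_def)
  have form: "(vector [v1, v2] :: real^2) \<bullet> (W *v vector [v1, v2]) = W$1$1 * v1^2 + 2 * W$1$2 * v1 * v2 + W$2$2 * v2^2" for v1 v2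
    using sym by (simp add: inner_vec_def sum_2 matrix_vector_mult_def algebra_simps power2_eq_square)
  have nz: "(vector [v1, v2] :: real^2) \<noteq> 0 \<longleftrightarrow> v1 \<noteq> 0 \<or> v2 \<noteq> 0" for v1 v2
    by (auto simp: vec_eq_iff forall_2)
  show psd: "W$1$1 * v1^2 + 2 * W$1$2 * v1 * v2 + W$2$2 * v2^2 \<ge> 0" for v1 v2
  proof (cases "v1 = 0 \<and> v2 = 0")
    case True then show ?thesis by simp
  next
    case False then show ?thesis using p[of "vector [v1, v2]"] form nz by fastforce
  qed
  show pos: "W$1$1 > 0" using p[of "vector [1, 0]"] form[of 1 0] nz[of 1 0] by simp
  have "W$1$1 * (W$1$1 * W$2$2 - W$1$2 * W$2$1) \<ge> 0"
    using psd[of "- W$1$2" "W$1$1"] sym by (simp add: algebra_simps power2_eq_square)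
  then show "W$1$1 * W$2$2 - W$1$2 * W$2$1 \<ge> 0" using pos by (simp add: zero_le_mult_iff)
qed

lemma divsplit:
  fixes V D N ss T P :: real
  assumes "D \<noteq> 0" "N \<noteq> 0"
  shows "(V + N * ((N - N * ss) * T + N * P)) / (D * N^2) = V / (D * N^2) + (1 - ss) / D * T + P / D"
  using assms by (simp add: field_simps power2_eq_square)

context qm begin

definition "TT W = W$1$1 * (d 2 \<bullet> d 2) - 2 * W$1$2 * (d 1 \<bullet> d 2) + W$2$2 * (d 1 \<bullet> d 1)"
definition "PA W = W$2$2 * (s \<bullet> d 1)^2 - 2 * W$1$2 * (s \<bullet> d 1) * (s \<bullet> d 2) + W$1$1 * (s \<bullet> d 2)^2"

lemma NNc_pos: "NN - cc^2 > 0" using cc2 by simp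

lemma hol_eq:
  fixes W :: "real^2^2"
  assumes dx: "\<And>i j. d i \<bullet> x j = (if i = j then 1 else 0)"
  defines "y1 \<equiv> (NN - cc^2) * (x 1 \<bullet> nn) - cc * ((s \<bullet> d 1) * (d 2 \<bullet> d 2) - (s \<bullet> d 2) * (d 1 \<bullet> d 2))"
    and "y2 \<equiv> (NN - cc^2) * (x 2 \<bullet> nn) - cc * ((s \<bullet> d 2) * (d 1 \<bullet> d 1) - (s \<bullet> d 1) * (d 1 \<bullet> d 2))"
  shows "W$1$1 * Rr x 1 1 + 2 * W$1$2 * Rr x 1 2 + W$2$2 * Rr x 2 2 =
     (W$1$1 * y1^2 + 2 * W$1$2 * y1 * y2 + W$2$2 * y2^2) / ((NN - cc^2) * NN^2) + kap * TT W + PA W / (NN - cc^2)"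
proof -
  note r = red[OF dx]
  have id: "(NN - cc^2) * (NN^2 * (W$1$1 * Rr x 1 1 + 2 * W$1$2 * Rr x 1 2 + W$2$2 * Rr x 2 2))
     = (W$1$1 * y1^2 + 2 * W$1$2 * y1 * y2 + W$2$2 * y2^2) + NN * ((NN - NN * (s \<bullet> s)) * TT W + NN * PA W)"
    unfolding Rr_def y1_def y2_def TT_def PA_def
    by (rule core2[OF NN_eq r(6) r(1) r(2) r(3) r(4) r(5)])
  have p1: "NN > 0" using NN_pos .
  have p2: "NN - cc^2 > 0" using NNc_pos .
  define Q where "Q = W$1$1 * Rr x 1 1 + 2 * W$1$2 * Rr x 1 2 + W$2$2 * Rr x 2 2"
  define V where "V = W$1$1 * y1^2 + 2 * W$1$2 * y1 * y2 + W$2$2 * y2^2"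
  have ne: "(NN - cc^2) * NN^2 \<noteq> 0" using p1 p2 by simp
  have "Q = (V + NN * ((NN - NN * (s \<bullet> s)) * TT W + NN * PA W)) / ((NN - cc^2) * NN^2)"
    using id ne unfolding Q_def[symmetric] V_def[symmetric] by (simp add: eq_divide_eq mult.assoc mult.commute)
  also have "\<dots> = V / ((NN - cc^2) * NN^2) + kap * TT W + PA W / (NN - cc^2)"
    unfolding kap_def by (rule divsplit) (use p1 p2 in auto)
  finally show ?thesis unfolding Q_def V_def .
qed

end


context qm begin

definition "x0 = (\<lambda>j::2. if j = 1 then (1/NN) *\<^sub>R ((d 2 \<bullet> d 2) *\<^sub>R d 1 - (d 1 \<bullet> d 2) *\<^sub>R d 2)
    else (1/NN) *\<^sub>R ((d 1 \<bullet> d 1) *\<^sub>R d 2 - (d 1 \<bullet> d 2) *\<^sub>R d 1))"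

lemma x0_dx: "d i \<bullet> x0 j = (if i = j then 1 else 0)"
proof -
  have ne: "NN \<noteq> 0" using NN_pos by simp
  have e1: "(d 2 \<bullet> d 2) * (d 1 \<bullet> d 1) - (d 1 \<bullet> d 2) * (d 1 \<bullet> d 2) = NN"
    by (simp add: NN_eq power2_eq_square algebra_simps)
  have e2: "(d 1 \<bullet> d 1) * (d 2 \<bullet> d 2) - (d 1 \<bullet> d 2) * (d 1 \<bullet> d 2) = NN"
    by (simp add: NN_eq power2_eq_square algebra_simps)
  have c11: "d 1 \<bullet> x0 1 = 1"
  proof -
    have "d 1 \<bullet> x0 1 = (1/NN) * ((d 2 \<bullet> d 2) * (d 1 \<bullet> d 1) - (d 1 \<bullet> d 2) * (d 1 \<bullet> d 2))"
      by (simp add: x0_def inner_diff_right)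
    then show ?thesis unfolding e1 using ne by simp
  qed
  have c22: "d 2 \<bullet> x0 2 = 1"
  proof -
    have "d 2 \<bullet> x0 2 = (1/NN) * ((d 1 \<bullet> d 1) * (d 2 \<bullet> d 2) - (d 1 \<bullet> d 2) * (d 1 \<bullet> d 2))"
      by (simp add: x0_def inner_diff_right inner_commute)
    then show ?thesis unfolding e2 using ne by simp
  qed
  have c21: "d 2 \<bullet> x0 1 = 0" by (simp add: x0_def inner_diff_right inner_commute)
  have c12: "d 1 \<bullet> x0 2 = 0" by (simp add: x0_def inner_diff_right inner_commute)
  have "i = 1 \<or> i = 2" "j = 1 \<or> j = 2" using exhaust_2 by blast+
  then show ?thesis using c11 c22 c21 c12 by auto
qed

lemma x0_nn: "x0 j \<bullet> nn = 0"
proof -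
  have "d 1 \<bullet> nn = 0" "d 2 \<bullet> nn = 0" by (simp_all add: cross3_simps)
  then show ?thesis by (simp add: x0_def inner_diff_left)
qed

definition "HV W = {trace (W ** ReM (Zmat \<rho> \<theta> X)) + TrAbs (W ** ImM (Zmat \<rho> \<theta> X)) | X. loc_unbiased \<rho> \<theta> X}"

lemma Hol_HV: "Holevo_bound \<rho> \<theta> W = Inf (HV W)"
  unfolding Holevo_bound_def HV_def ..

definition "hv W x = W$1$1 * Rr x 1 1 + 2 * W$1$2 * Rr x 1 2 + W$2$2 * Rr x 2 2
      + 2 * \<bar>s \<bullet> cross3 (x 1) (x 2)\<bar> * sqrt (W$1$1 * W$2$2 - W$1$2 * W$2$1)"

lemma HV_elem:
  assumes W: "real_posdef W" and y: "y \<in> HV W"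
  obtains x where "\<And>i j. d i \<bullet> x j = (if i = j then 1 else 0)" "y = hv W x"
proof -
  obtain X where X: "loc_unbiased \<rho> \<theta> X" and yX: "y = trace (W ** ReM (Zmat \<rho> \<theta> X)) + TrAbs (W ** ImM (Zmat \<rho> \<theta> X))"
    using y unfolding HV_def by blast
  obtain x where x: "\<And>j. X j = hm (- (s \<bullet> x j)) (x j)" and dx: "\<And>i j. d i \<bullet> x j = (if i = j then 1 else 0)"
    using LU_repr[OF X] by blast
  have XX: "X = (\<lambda>j. hm (- (s \<bullet> x j)) (x j))" using x by auto
  have "y = hv W x" unfolding yX XX hv_def
    by (rule hol_val) (use posdef_facts[OF W] in auto)
  then show ?thesis using that dx by blast
qed

lemma HV_mem:
  assumes W: "real_posdef W" and dx: "\<And>i j. d i \<bullet> x j = (if i = j then 1 else 0)"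
  shows "hv W x \<in> HV W"
proof -
  have "hv W x = trace (W ** ReM (Zmat \<rho> \<theta> (\<lambda>j. hm (- (s \<bullet> x j)) (x j)))) + TrAbs (W ** ImM (Zmat \<rho> \<theta> (\<lambda>j. hm (- (s \<bullet> x j)) (x j))))"
    unfolding hv_def by (rule hol_val[symmetric]) (use posdef_facts[OF W] in auto)
  then show ?thesis unfolding HV_def using LU_mk[OF dx] by blast
qed

lemma V_nonneg:
  assumes W: "real_posdef W"
  shows "(W$1$1 * y1^2 + 2 * W$1$2 * y1 * y2 + W$2$2 * y2^2) / ((NN - cc^2) * NN^2) \<ge> 0"
  using posdef_facts(3)[OF W, of y1 y2] NN_pos NNc_pos by simp

lemma hv_lower:
  assumes W: "real_posdef W" and dx: "\<And>i j. d i \<bullet> x j = (if i = j then 1 else 0)"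
  shows "hv W x \<ge> kap * TT W + PA W / (NN - cc^2)"
proof -
  have "W$1$1 * Rr x 1 1 + 2 * W$1$2 * Rr x 1 2 + W$2$2 * Rr x 2 2 \<ge> kap * TT W + PA W / (NN - cc^2)"
    unfolding hol_eq[OF dx] using V_nonneg[OF W] by simp
  moreover have "0 \<le> 2 * \<bar>s \<bullet> cross3 (x 1) (x 2)\<bar> * sqrt (W$1$1 * W$2$2 - W$1$2 * W$2$1)"
    using posdef_facts(4)[OF W] by simp
  ultimately show ?thesis unfolding hv_def by linarith
qed

lemma eq_case:
  assumes p1: "s \<bullet> d 1 = 0" and p2: "s \<bullet> d 2 = 0" and W: "real_posdef W"
  shows "Holevo_bound \<rho> \<theta> W = RLD_bound \<rho> \<theta> W"
proof -
  note wf = posdef_facts[OF W]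
  define q where "q = sqrt (W$1$1 * W$2$2 - W$1$2 * W$2$1)"
  have R: "RLD_bound \<rho> \<theta> W = kap * TT W + 2 * kap * \<bar>cc\<bar> * q"
    unfolding RLD_bound_eq[OF wf(1) wf(4)] TT_def q_def ..
  have Nss: "NN * (s \<bullet> s) = cc^2" using red(6)[OF x0_dx] p1 p2 by simp
  have kap: "kap = 1 / NN"
  proof -
    have "1 - s \<bullet> s = (NN - cc^2) / NN" using Nss NN_pos by (simp add: field_simps)
    then show ?thesis unfolding kap_def using NNc_pos by simp
  qed
  have PA0: "PA W = 0" unfolding PA_def p1 p2 by simp
  have val: "hv W x = (W$1$1 * y1^2 + 2 * W$1$2 * y1 * y2 + W$2$2 * y2^2) / ((NN - cc^2) * NN^2) + RLD_bound \<rho> \<theta> W"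
    if dx: "\<And>i j. d i \<bullet> x j = (if i = j then 1 else 0)"
      and y1: "y1 = (NN - cc^2) * (x 1 \<bullet> nn)" and y2: "y2 = (NN - cc^2) * (x 2 \<bullet> nn)" for x y1 y2
  proof -
    have A: "s \<bullet> cross3 (x 1) (x 2) = cc / NN" using red(7)[OF dx] p1 p2 NN_pos by (simp add: field_simps)
    have "hv W x = (W$1$1 * y1^2 + 2 * W$1$2 * y1 * y2 + W$2$2 * y2^2) / ((NN - cc^2) * NN^2) + kap * TT W
        + 2 * \<bar>cc / NN\<bar> * q"
      unfolding hv_def hol_eq[OF dx] A PA0 q_def y1 y2 p1 p2 by simp
    also have "2 * \<bar>cc / NN\<bar> * q = 2 * kap * \<bar>cc\<bar> * q" using NN_pos unfolding kap by simp
    finally show ?thesis unfolding R by simp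
  qed
  show ?thesis unfolding Hol_HV
  proof (rule cInf_eq_minimum)
    have "hv W x0 = RLD_bound \<rho> \<theta> W" using val[OF x0_dx refl refl] unfolding x0_nn by simp
    then show "RLD_bound \<rho> \<theta> W \<in> HV W" using HV_mem[OF W x0_dx] by simp
  next
    fix y assume "y \<in> HV W"
    then obtain x where dx: "\<And>i j. d i \<bullet> x j = (if i = j then 1 else 0)" and y: "y = hv W x"
      using HV_elem[OF W] by blast
    show "RLD_bound \<rho> \<theta> W \<le> y" unfolding y val[OF dx refl refl] using V_nonneg[OF W] by simp
  qed
qed

end


context qm begin

lemma neq_case:
  assumes np: "\<not> (s \<bullet> d 1 = 0 \<and> s \<bullet> d 2 = 0)"
  shows "\<exists>W. real_posdef W \<and> Holevo_bound \<rho> \<theta> W \<noteq> RLD_bound \<rho> \<theta> W"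
proof -
  define p1 where "p1 = s \<bullet> d 1"
  define p2 where "p2 = s \<bullet> d 2"
  define P where "P = p1^2 + p2^2"
  have Ppos: "P > 0" using np unfolding P_def p1_def p2_def by (auto simp: add_pos_nonneg add_nonneg_pos)
  define K where "K = 1 + 2 * \<bar>cc\<bar> / P"
  have K1: "K \<ge> 1" unfolding K_def using Ppos by simp
  have KP: "K * P = P + 2 * \<bar>cc\<bar>" unfolding K_def using Ppos by (simp add: field_simps)
  define kk where "kk = (K^2 - 1) / P"
  have kk0: "kk \<ge> 0" unfolding kk_def using K1 Ppos by (simp add: one_le_power)
  have kkP: "kk * P = K^2 - 1" unfolding kk_def using Ppos by simp
  define W :: "real^2^2" where "W = (\<chi> i j. if i = 1 then (if j = 1 then 1 + kk * p2^2 else - kk * p1 * p2)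
      else (if j = 1 then - kk * p1 * p2 else 1 + kk * p1^2))"
  have Wc: "W$1$1 = 1 + kk * p2^2" "W$1$2 = - kk * p1 * p2" "W$2$1 = - kk * p1 * p2" "W$2$2 = 1 + kk * p1^2"
    by (simp_all add: W_def)
  have form: "x \<bullet> (W *v x) = (x$1)^2 + (x$2)^2 + kk * (p2 * x$1 - p1 * x$2)^2" for x :: "real^2"
    by (simp add: inner_vec_def sum_2 matrix_vector_mult_def Wc algebra_simps power2_eq_square)
  have Wpd: "real_posdef W"
    unfolding real_posdef_def
  proof (intro conjI allI impI)
    show "transpose W = W" by (simp add: transpose_def vec_eq_iff forall_2 Wc)
    fix x :: "real^2" assume "x \<noteq> 0"
    then have "x$1 \<noteq> 0 \<or> x$2 \<noteq> 0" by (auto simp: vec_eq_iff forall_2)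
    then have "(x$1)^2 + (x$2)^2 > 0" by (auto simp: add_pos_nonneg add_nonneg_pos)
    moreover have "kk * (p2 * x$1 - p1 * x$2)^2 \<ge> 0" using kk0 by simp
    ultimately show "x \<bullet> (W *v x) > 0" unfolding form by linarith
  qed
  have det: "W$1$1 * W$2$2 - W$1$2 * W$2$1 = K^2"
  proof -
    have "W$1$1 * W$2$2 - W$1$2 * W$2$1 = 1 + kk * P" unfolding Wc P_def by (simp add: algebra_simps power2_eq_square)
    then show ?thesis using kkP by simp
  qed
  have sq: "sqrt (W$1$1 * W$2$2 - W$1$2 * W$2$1) = K" unfolding det using K1 by simp
  have PA: "PA W = P * K^2"
  proof -
    have "PA W = P + kk * P * P" unfolding PA_def Wc P_def p1_def[symmetric] p2_def[symmetric]
      by (simp add: algebra_simps power2_eq_square)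
    also have "\<dots> = P * (1 + kk * P)" by (simp add: algebra_simps)
    also have "\<dots> = P * K^2" using kkP by simp
    finally show ?thesis .
  qed
  note wf = posdef_facts[OF Wpd]
  have R: "RLD_bound \<rho> \<theta> W = kap * TT W + 2 * kap * \<bar>cc\<bar> * K"
    unfolding RLD_bound_eq[OF wf(1) wf(4)] TT_def sq ..
  have H: "Holevo_bound \<rho> \<theta> W \<ge> kap * TT W + PA W / (NN - cc^2)"
    unfolding Hol_HV
  proof (rule cInf_greatest)
    show "HV W \<noteq> {}" using HV_mem[OF Wpd x0_dx] by blast
    fix y assume "y \<in> HV W"
    then obtain x where dx: "\<And>i j. d i \<bullet> x j = (if i = j then 1 else 0)" and y: "y = hv W x"
      using HV_elem[OF Wpd] by blast
    show "kap * TT W + PA W / (NN - cc^2) \<le> y" unfolding y by (rule hv_lower[OF Wpd dx])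
  qed
  have strict: "PA W / (NN - cc^2) > 2 * kap * \<bar>cc\<bar> * K"
  proof -
    have D: "NN - cc^2 > 0" by (rule NNc_pos)
    have "P * K^2 - 2 * (1 - s \<bullet> s) * \<bar>cc\<bar> * K = K * (K * P - 2 * \<bar>cc\<bar> + 2 * (s \<bullet> s) * \<bar>cc\<bar>)"
      by (simp add: algebra_simps power2_eq_square)
    also have "\<dots> = K * (P + 2 * (s \<bullet> s) * \<bar>cc\<bar>)" unfolding KP by simp
    finally have "P * K^2 - 2 * (1 - s \<bullet> s) * \<bar>cc\<bar> * K > 0"
      using K1 Ppos by (simp add: add_pos_nonneg)
    then have "2 * (1 - s \<bullet> s) * \<bar>cc\<bar> * K < P * K^2" by simp
    then have "2 * (1 - s \<bullet> s) * \<bar>cc\<bar> * K / (NN - cc^2) < P * K^2 / (NN - cc^2)"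
      using D by (simp add: divide_strict_right_mono)
    then show ?thesis unfolding PA kap_def by simp
  qed
  have "Holevo_bound \<rho> \<theta> W \<noteq> RLD_bound \<rho> \<theta> W" using H strict R by linarith
  then show ?thesis using Wpd by blast
qed

lemma main_iff: "(\<forall>W. real_posdef W \<longrightarrow> Holevo_bound \<rho> \<theta> W = RLD_bound \<rho> \<theta> W) \<longleftrightarrow> D_invariant \<rho> \<theta>"
  unfolding Dinv_iff using eq_case neq_case by blast

end


lemma quad_hm:
  fixes a :: real and v :: "real^3"
  defines "A \<equiv> hm a v"
  shows "Re (\<Sum>i\<in>UNIV. cnj ((vector [- A$1$2, A$1$1] :: complex^2) $ i) * (A *v vector [- A$1$2, A$1$1]) $ i)
     = (a + v$3) * ((a + v$3) * (a - v$3) - (v$1)^2 - (v$2)^2)"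
    "Re (\<Sum>i\<in>UNIV. cnj ((vector [1, 0] :: complex^2) $ i) * (A *v vector [1, 0]) $ i) = a + v$3"
  unfolding A_def by (simp_all add: sum_2 matrix_vector_mult_def hm_nth algebra_simps power2_eq_square)

lemma bl_cadj: "bounded_linear cadj"
  using linear_cadj linear_conv_bounded_linear by blast

lemma bl_trace: "bounded_linear (trace :: qop \<Rightarrow> complex)"
  using linear_trace linear_conv_bounded_linear by blast

lemma model_qm:
  assumes reg: "regular_model \<Theta> \<rho>" and th: "\<theta> \<in> \<Theta>"
  shows "\<exists>s d. qm \<rho> \<theta> s d"
proof -
  have op: "open \<Theta>" and dens: "\<And>x. x \<in> \<Theta> \<Longrightarrow> density (\<rho> x)" and sm: "smooth_on \<Theta> \<rho>"
    and ind: "\<And>a b. a *\<^sub>R pd \<rho> \<theta> 1 + b *\<^sub>R pd \<rho> \<theta> 2 = 0 \<Longrightarrow> a = 0 \<and> b = 0"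
    using reg th unfolding regular_model_def by auto
  have sp: "strictly_pos (\<rho> \<theta>)" and tr1: "trace (\<rho> \<theta>) = 1" using dens[OF th] by (auto simp: density_def)
  then obtain a v where av: "\<rho> \<theta> = hm a v" using herm_ex strictly_pos_def by blast
  have a: "a = 1/2" using tr1 unfolding av trace_hm of_real_eq_1_iff by simp
  have pos: "\<And>x::complex^2. x \<noteq> 0 \<Longrightarrow> Re (\<Sum>i\<in>UNIV. cnj (x $ i) * (\<rho> \<theta> *v x) $ i) > 0"
    using sp by (simp add: strictly_pos_def)
  have v3: "a + v$3 > 0"
  proof -
    have "(vector [1, 0] :: complex^2) \<noteq> 0" by (auto simp: vec_eq_iff forall_2)
    from pos[OF this] show ?thesis unfolding av quad_hm(2) .
  qed
  have "(vector [- (hm a v)$1$2, (hm a v)$1$1] :: complex^2) \<noteq> 0"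
    using v3 by (auto simp: vec_eq_iff forall_2 hm_nth complex_eq_iff)
  from pos[OF this] have "(a + v$3) * ((a + v$3) * (a - v$3) - (v$1)^2 - (v$2)^2) > 0"
    unfolding av quad_hm(1) .
  then have dpos: "(a + v$3) * (a - v$3) - (v$1)^2 - (v$2)^2 > 0"
    using v3 by (simp add: zero_less_mult_iff)
  define s where "s = 2 *\<^sub>R v"
  have rho: "\<rho> \<theta> = hm (1/2) ((1/2) *\<^sub>R s)" unfolding s_def av a by simp
  have ss: "s \<bullet> s < 1"
  proof -
    have "s \<bullet> s = 4 * ((v$1)^2 + (v$2)^2 + (v$3)^2)"
      by (simp add: s_def inner_vec_def sum_3 power2_eq_square)
    then show ?thesis using dpos a by (simp add: algebra_simps power2_eq_square)
  qed
  have diff: "\<rho> differentiable (at \<theta>)" using sm th by (auto elim: smooth_on.cases)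
  define D where "D = frechet_derivative \<rho> (at \<theta>)"
  have hD: "(\<rho> has_derivative D) (at \<theta>)" using diff unfolding D_def by (simp add: frechet_derivative_works)
  have hermx: "\<And>x. x \<in> \<Theta> \<Longrightarrow> cadj (\<rho> x) = \<rho> x"
    using dens by (auto simp: density_def strictly_pos_def herm_def)
  have trx: "\<And>x. x \<in> \<Theta> \<Longrightarrow> trace (\<rho> x) = 1"
    using dens by (auto simp: density_def)
  have h1: "((\<lambda>x. cadj (\<rho> x)) has_derivative (\<lambda>v. cadj (D v))) (at \<theta>)"
    by (rule bounded_linear.has_derivative[OF bl_cadj hD])
  have h2: "(\<rho> has_derivative (\<lambda>v. cadj (D v))) (at \<theta>)"
    by (rule has_derivative_transform_within_open[OF h1 op th]) (simp add: hermx)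
  have cD: "(\<lambda>v. cadj (D v)) = D" by (rule has_derivative_unique[OF h2 hD])
  have t1: "((\<lambda>x. trace (\<rho> x)) has_derivative (\<lambda>v. trace (D v))) (at \<theta>)"
    by (rule bounded_linear.has_derivative[OF bl_trace hD])
  have t2: "((\<lambda>x. 1::complex) has_derivative (\<lambda>v. trace (D v))) (at \<theta>)"
    by (rule has_derivative_transform_within_open[OF t1 op th]) (simp add: trx)
  have tD: "(\<lambda>v. trace (D v)) = (\<lambda>v. 0)" by (rule has_derivative_unique[OF t2 has_derivative_const])
  have pdform: "\<exists>e. pd \<rho> \<theta> i = hm 0 e" for i
  proof -
    have "cadj (D w) = D w" for w using fun_cong[OF cD, of w] by simp
    then have hp: "herm (pd \<rho> \<theta> i)" unfolding herm_def pd_def D_def[symmetric] by blast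
    then obtain b e where be: "pd \<rho> \<theta> i = hm b e" using herm_ex by blast
    have "trace (D w) = 0" for w using fun_cong[OF tD, of w] by simp
    then have "trace (pd \<rho> \<theta> i) = 0" unfolding pd_def D_def[symmetric] by blast
    then have "b = 0" unfolding be trace_hm by simp
    then show ?thesis using be by blast
  qed
  have ex: "\<forall>i. \<exists>e. pd \<rho> \<theta> i = hm 0 e" using pdform by blast
  obtain e where e0: "\<forall>i. pd \<rho> \<theta> i = hm 0 (e i)" using choice[OF ex] by blast
  then have e: "\<And>i. pd \<rho> \<theta> i = hm 0 (e i)" by blast
  define d where "d = (\<lambda>i. 2 *\<^sub>R e i)"
  have pdd: "\<And>i. pd \<rho> \<theta> i = hm 0 ((1/2) *\<^sub>R d i)" unfolding d_def e by simp
  have nz: "cross3 (d 1) (d 2) \<noteq> 0"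
  proof
    assume n0: "cross3 (d 1) (d 2) = 0"
    have comb: "a *\<^sub>R pd \<rho> \<theta> 1 + b *\<^sub>R pd \<rho> \<theta> 2 = hm 0 ((1/2) *\<^sub>R (a *\<^sub>R d 1 + b *\<^sub>R d 2))" for a b
      unfolding pdd hm_scale hm_add by (simp add: algebra_simps)
    show False
    proof (cases "d 1 = 0")
      case True
      then have "1 *\<^sub>R pd \<rho> \<theta> 1 + 0 *\<^sub>R pd \<rho> \<theta> 2 = 0" unfolding comb by (simp add: hm_zero)
      then show False using ind[of 1 0] by simp
    next
      case False
      define l where "l = (d 1 \<bullet> d 2) / (d 1 \<bullet> d 1)"
      have g: "d 1 \<bullet> d 1 > 0" using False by simp
      have lag: "(d 1 \<bullet> d 1) * (d 2 \<bullet> d 2) - (d 1 \<bullet> d 2)^2 = 0" using n0 lagrange3[of "d 1" "d 2"] by simp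
      have "(d 1 \<bullet> d 1) * ((d 2 - l *\<^sub>R d 1) \<bullet> (d 2 - l *\<^sub>R d 1)) = (d 1 \<bullet> d 1) * (d 2 \<bullet> d 2) - (d 1 \<bullet> d 2)^2"
        using g unfolding l_def by (simp add: inner_diff_left inner_diff_right inner_commute field_simps power2_eq_square)
      then have "(d 2 - l *\<^sub>R d 1) \<bullet> (d 2 - l *\<^sub>R d 1) = 0" using lag g by simp
      then have "d 2 - l *\<^sub>R d 1 = 0" by simp
      then have "(- l) *\<^sub>R pd \<rho> \<theta> 1 + 1 *\<^sub>R pd \<rho> \<theta> 2 = 0" unfolding comb by (simp add: hm_zero algebra_simps)
      then show False using ind[of "- l" 1] by simp
    qed
  qed
  have "qm \<rho> \<theta> s d" by unfold_locales (fact rho ss pdd nz)+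
  then show ?thesis by blast
qed

theorem proposition2:
  fixes \<Theta> :: "(real^2) set" and \<rho> :: "real^2 \<Rightarrow> complex^2^2" and \<theta> :: "real^2"
  assumes "regular_model \<Theta> \<rho>" and "\<theta> \<in> \<Theta>"
  shows "(\<forall>W. real_posdef W \<longrightarrow> Holevo_bound \<rho> \<theta> W = RLD_bound \<rho> \<theta> W)
         \<longleftrightarrow> D_invariant \<rho> \<theta>"
proof -
  obtain s d where "qm \<rho> \<theta> s d" using model_qm[OF assms] by blast
  then interpret qm \<rho> \<theta> s d .
  show ?thesis by (rule main_iff)
qed


end
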